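(* Assume the setting in the context (in particular the Causal Faithfulness Condition). Let $x_i,x_j,x_k\in X$ be distinct. If $x_k$ is an ancestor of $x_i$ in $G$ and $x_k\perp\!\!\!\perp x_j\mid x_i$, then (1) there is no backdoor path between $x_i$ and $x_j$ in $G$, and (2) $x_j$ is not an ancestor of $x_i$.
   Context: Model: $X$ is a finite set of observed random variables and $U$ a finite set of unobserved random variables; $V=X\cup U$ and $G=(V,E)$ is a DAG on $V$. Each $v_i\in V$ satisfies $v_i=\sum_{x_j\in \mathrm{pa}(v_i)\cap X} f^{(i)}_j(x_j)+\sum_{u_k\in\mathrm{pa}(v_i)\cap U} f^{(i)}_k(u_k)+n_i$, where the $f$'s are nonlinear functions and the external noises $n_i$ are jointly independent. "Parent", "ancestor", "path", "d-separation" refer to $G$ (a path has distinct vertices). Causal Faithfulness Condition (CFC): any conditional independence among variables of $V$ that is not entailed by d-separation in $G$ does not hold. $\perp\!\!\!\perp$ denotes statistical independence. A backdoor path between $x_i$ and $x_j$ is a path in $G$ of the form $x_i\leftarrow\cdots\leftarrow v\to\cdots\to x_j$ for some vertex $v\in V$ (the vertices on it may be observed or unobserved). *)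

theory Defs
  imports "HOL-Probability.Probability"
begin

definition parents :: "('v \<times> 'v) set \<Rightarrow> 'v \<Rightarrow> 'v set" where
  "parents E v = {u. (u, v) \<in> E}"

definition is_dag :: "'v set \<Rightarrow> ('v \<times> 'v) set \<Rightarrow> bool" where
  "is_dag V E \<longleftrightarrow> finite V \<and> E \<subseteq> V \<times> V \<and> acyclic E"

definition ancestor :: "('v \<times> 'v) set \<Rightarrow> 'v \<Rightarrow> 'v \<Rightarrow> bool" where
  "ancestor E a b \<longleftrightarrow> (a, b) \<in> E\<^sup>+"

definition is_path :: "('v \<times> 'v) set \<Rightarrow> 'v list \<Rightarrow> bool" where
  "is_path E p \<longleftrightarrow> p \<noteq> [] \<and> distinct p \<and>
     (\<forall>t. t + 1 < length p \<longrightarrow> (p ! t, p ! (t + 1)) \<in> E \<or> (p ! (t + 1), p ! t) \<in> E)"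

definition path_between :: "('v \<times> 'v) set \<Rightarrow> 'v list \<Rightarrow> 'v \<Rightarrow> 'v \<Rightarrow> bool" where
  "path_between E p a b \<longleftrightarrow> is_path E p \<and> hd p = a \<and> last p = b"

definition collider_at :: "('v \<times> 'v) set \<Rightarrow> 'v list \<Rightarrow> nat \<Rightarrow> bool" where
  "collider_at E p t \<longleftrightarrow> (p ! (t - 1), p ! t) \<in> E \<and> (p ! (t + 1), p ! t) \<in> E"

definition blocked :: "('v \<times> 'v) set \<Rightarrow> 'v list \<Rightarrow> 'v set \<Rightarrow> bool" where
  "blocked E p S \<longleftrightarrow> (\<exists>t. 0 < t \<and> t + 1 < length p \<and>
     ((\<not> collider_at E p t \<and> p ! t \<in> S) \<or>
      (collider_at E p t \<and> \<not> (\<exists>w\<in>S. (p ! t, w) \<in> E\<^sup>*))))"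

definition d_separated :: "('v \<times> 'v) set \<Rightarrow> 'v \<Rightarrow> 'v \<Rightarrow> 'v set \<Rightarrow> bool" where
  "d_separated E a b S \<longleftrightarrow> (\<forall>p. path_between E p a b \<longrightarrow> blocked E p S)"

definition backdoor_path :: "('v \<times> 'v) set \<Rightarrow> 'v list \<Rightarrow> 'v \<Rightarrow> 'v \<Rightarrow> bool" where
  "backdoor_path E p a b \<longleftrightarrow> path_between E p a b \<and>
     (\<exists>m. 0 < m \<and> m + 1 < length p \<and>
        (\<forall>t < m. (p ! (t + 1), p ! t) \<in> E) \<and>
        (\<forall>t. m \<le> t \<and> t + 1 < length p \<longrightarrow> (p ! t, p ! (t + 1)) \<in> E))"

definition gen_sigma :: "'w measure \<Rightarrow> ('v \<Rightarrow> 'w \<Rightarrow> real) \<Rightarrow> 'v set \<Rightarrow> 'w measure" where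
  "gen_sigma M Y S = sigma (space M) {Y v -` B \<inter> space M | v B. v \<in> S \<and> B \<in> sets borel}"

definition cond_indep :: "'w measure \<Rightarrow> ('v \<Rightarrow> 'w \<Rightarrow> real) \<Rightarrow> 'v \<Rightarrow> 'v \<Rightarrow> 'v set \<Rightarrow> bool" where
  "cond_indep M Y a b S \<longleftrightarrow> (\<forall>A\<in>sets borel. \<forall>B\<in>sets borel.
     AE \<omega> in M. real_cond_exp M (gen_sigma M Y S)
                   (\<lambda>\<omega>. indicator A (Y a \<omega>) * indicator B (Y b \<omega>)) \<omega>
               = real_cond_exp M (gen_sigma M Y S) (\<lambda>\<omega>. indicator A (Y a \<omega>)) \<omega>
                 * real_cond_exp M (gen_sigma M Y S) (\<lambda>\<omega>. indicator B (Y b \<omega>)) \<omega>)"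

definition nonlinear :: "(real \<Rightarrow> real) \<Rightarrow> bool" where
  "nonlinear g \<longleftrightarrow> \<not> (\<exists>c d. \<forall>x. g x = c * x + d)"

end

theory Submission
  imports Defs
begin

lemma acyc_2: "acyclic E \<Longrightarrow> (a,b)\<in>E \<Longrightarrow> (b,a)\<in>E \<Longrightarrow> False"
  by (meson acyclic_def trancl.simps trancl_into_trancl2)

lemma rtrancl_dpath:
  assumes "(a,c)\<in>E\<^sup>*"
  shows "\<exists>xs. xs\<noteq>[] \<and> distinct xs \<and> hd xs = a \<and> last xs = c \<and>
          (\<forall>t. t+1<length xs \<longrightarrow> (xs!t,xs!(t+1))\<in>E)"
  using assms
proof (induction rule: converse_rtrancl_induct)
  case base
  then show ?case by (intro exI[of _ "[c]"]) auto
next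
  case (step a b)
  then obtain xs where xs: "xs\<noteq>[]" "distinct xs" "hd xs = b" "last xs = c"
    "\<forall>t. t+1<length xs \<longrightarrow> (xs!t,xs!(t+1))\<in>E" by blast
  show ?case
  proof (cases "a \<in> set xs")
    case True
    then obtain j where j: "j < length xs" "xs!j = a" by (metis in_set_conv_nth)
    show ?thesis
      apply (intro exI[of _ "drop j xs"])
      using xs j by (auto simp: hd_drop_conv_nth add.assoc)
  next
    case False
    have "\<forall>t. t+1<length (a#xs) \<longrightarrow> ((a#xs)!t,(a#xs)!(t+1))\<in>E"
    proof (intro allI impI)
      fix t assume "t+1<length (a#xs)"
      then show "((a#xs)!t,(a#xs)!(t+1))\<in>E"
        using xs step(1) by (cases t) (auto simp: hd_conv_nth)
    qed
    then show ?thesis using xs False by (intro exI[of _ "a#xs"]) auto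
  qed
qed

lemma unblocked:
  assumes acyc: "acyclic E"
    and sh: "\<forall>t. t+1<length q \<longrightarrow> (if t<i \<or> m\<le>t then (q!t,q!(t+1))\<in>E else (q!(t+1),q!t)\<in>E)"
    and im: "i \<le> m"
    and xc: "\<forall>t<length q. q!t = x \<longrightarrow> t=i \<and> 0<i \<and> i<m"
    and rc: "0<i \<and> i<m \<longrightarrow> (q!i,x)\<in>E\<^sup>*"
  shows "\<not> blocked E q {x}"
proof
  assume "blocked E q {x}"
  then obtain t where t: "0<t" "t+1<length q" and
    c: "(\<not> collider_at E q t \<and> q ! t \<in> {x}) \<or> (collider_at E q t \<and> \<not> (\<exists>w\<in>{x}. (q ! t, w) \<in> E\<^sup>*))"
    unfolding blocked_def by blast
  have col: "t = i \<and> 0<i \<and> i<m" if "collider_at E q t"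
  proof -
    have e1: "(q!(t-1),q!t)\<in>E" and e2: "(q!(t+1),q!t)\<in>E" using that unfolding collider_at_def by auto
    have "\<not> (t<i \<or> m\<le>t)"
    proof
      assume "t<i \<or> m\<le>t"
      then have "(q!t,q!(t+1))\<in>E" using sh t by auto
      then show False using acyc_2[OF acyc _ e2] by blast
    qed
    moreover have "\<not> (i \<le> t-1 \<and> t-1 < m)"
    proof
      assume h: "i \<le> t-1 \<and> t-1 < m"
      have "t-1+1 < length q" using t by auto
      then have "(q!(t-1+1),q!(t-1))\<in>E" using sh h by (auto split: if_splits)
      then show False using acyc_2[OF acyc e1] t by simp
    qed
    ultimately show ?thesis using t by auto
  qed
  show False
  proof (cases "collider_at E q t")
    case True
    then show False using col c rc by auto
  next
    case False
    then have "q!t = x" using c by auto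
    then have "t = i \<and> 0<i \<and> i<m" using xc t(2) by (metis Suc_eq_plus1 Suc_lessD)
    moreover have "collider_at E q t"
    proof -
      have a: "t-1+1 < length q" using t by auto
      have "(q!(t-1),q!(t-1+1))\<in>E" using sh[rule_format, OF a] calculation by auto
      moreover have "(q!(t+1),q!t)\<in>E" using sh t \<open>t = i \<and> 0<i \<and> i<m\<close> by auto
      ultimately show ?thesis using t unfolding collider_at_def by simp
    qed
    then show False using False by blast
  qed
qed

lemma bwd_reach:
  assumes "\<forall>t<m. (b!(t+1),b!t)\<in>E" "s \<le> m"
  shows "(b!s,b!0)\<in>E\<^sup>*"
  using assms(2)
proof (induction s)
  case 0 then show ?case by simp
next
  case (Suc s)
  then have "(b!(Suc s), b!s)\<in>E" using assms(1) by auto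
  then show ?case using Suc by (meson Suc_leD converse_rtrancl_into_rtrancl)
qed

lemma core:
  assumes acyc: "acyclic E"
    and P: "distinct P" "P\<noteq>[]" "hd P = xk" "last P = xi"
      "\<forall>t. t+1<length P \<longrightarrow> (P!t,P!(t+1))\<in>E"
    and b: "distinct b" "b\<noteq>[]" "hd b = xi" "last b = xj" "m < length b" "0 < m"
      "\<forall>t<m. (b!(t+1),b!t)\<in>E" "\<forall>t. m\<le>t \<and> t+1<length b \<longrightarrow> (b!t,b!(t+1))\<in>E"
    and d: "xi \<noteq> xk"
  shows "\<not> d_separated E xk xj {xi}"
proof -
  define i0 where "i0 = (LEAST i. i < length P \<and> P!i \<in> set b)"
  have ex: "length P - 1 < length P \<and> P!(length P - 1) \<in> set b"
    using P b hd_in_set[of b] last_conv_nth[of P] by simp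
  have i0: "i0 < length P" "P!i0 \<in> set b" using LeastI_ex[of "\<lambda>i. i < length P \<and> P!i \<in> set b"] ex
    unfolding i0_def by blast+
  have nb: "P!j \<notin> set b" if "j < i0" for j
    using not_less_Least[of j "\<lambda>i. i < length P \<and> P!i \<in> set b"] that i0 unfolding i0_def by auto
  obtain s where s: "s < length b" "b!s = P!i0" using i0 by (metis in_set_conv_nth)
  define q where "q = take i0 P @ drop s b"
  define m' where "m' = i0 + (m - s)"
  have lq: "length q = i0 + (length b - s)" using i0 s unfolding q_def by simp
  have qlo: "q!t = P!t" if "t < i0" for t using that i0 unfolding q_def by (simp add: nth_append)
  have qhi: "q!t = b!(s + (t - i0))" if "i0 \<le> t" "t < length q" for t
    using that i0 s lq unfolding q_def by (simp add: nth_append)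
  have b0: "b!0 = xi" using b by (simp add: hd_conv_nth)
  have sh: "\<forall>t. t+1<length q \<longrightarrow> (if t<i0 \<or> m'\<le>t then (q!t,q!(t+1))\<in>E else (q!(t+1),q!t)\<in>E)"
  proof (intro allI impI)
    fix t assume t: "t+1 < length q"
    show "if t<i0 \<or> m'\<le>t then (q!t,q!(t+1))\<in>E else (q!(t+1),q!t)\<in>E"
    proof (cases "t+1 < i0")
      case True
      then show ?thesis using qlo P(5) i0 by (auto simp: m'_def)
    next
      case False
      show ?thesis
      proof (cases "t < i0")
        case True
        then have "t+1 = i0" using False by simp
        then have "q!(t+1) = P!(t+1)" using qhi[of "t+1"] t s by simp
        then show ?thesis using True qlo P(5) i0 \<open>t+1 = i0\<close> by auto
      next
        case False
        have e1: "q!t = b!(s+(t-i0))" "q!(t+1) = b!(s+(t-i0)+1)"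
        proof -
          show "q!t = b!(s+(t-i0))" using qhi[of t] False t by simp
          have "s + (t+1-i0) = s+(t-i0)+1" using False by simp
          then show "q!(t+1) = b!(s+(t-i0)+1)" using qhi[of "t+1"] False t by simp
        qed
        have ib: "s+(t-i0)+1 < length b" using t lq False by simp
        show ?thesis
        proof (cases "m'\<le>t")
          case True
          then have "m \<le> s+(t-i0)" unfolding m'_def using False by simp
          then show ?thesis using b(8) ib e1 True by auto
        next
          case nt: False
          then have "s+(t-i0) < m" unfolding m'_def using False by simp
          then show ?thesis using b(7) e1 nt False by auto
        qed
      qed
    qed
  qed
  have xc: "\<forall>t<length q. q!t = xi \<longrightarrow> t=i0 \<and> 0<i0 \<and> i0<m'"
  proof (intro allI impI)
    fix t assume t: "t < length q" "q!t = xi"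
    show "t=i0 \<and> 0<i0 \<and> i0<m'"
    proof (cases "t < i0")
      case True
      then show ?thesis using t qlo nb b0 b(2) by (metis hd_conv_nth hd_in_set b(3))
    next
      case False
      then have "b!(s+(t-i0)) = b!0" using qhi t b0 by simp
      moreover have "s+(t-i0) < length b" using t lq False by simp
      ultimately have z: "s+(t-i0) = 0" using b(1) b(2) nth_eq_iff_index_eq[OF b(1), of "s+(t-i0)" 0] by simp
      then have "t = i0" "s = 0" using False by auto
      moreover have "i0 \<noteq> 0"
      proof
        assume "i0 = 0"
        then have "P!0 = xi" using s b0 \<open>s = 0\<close> by simp
        then show False using P d by (simp add: hd_conv_nth)
      qed
      ultimately show ?thesis using b(6) unfolding m'_def by simp
    qed
  qed
  have rc: "0<i0 \<and> i0<m' \<longrightarrow> (q!i0,xi)\<in>E\<^sup>*"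
  proof
    assume h: "0<i0 \<and> i0<m'"
    then have "s < m" unfolding m'_def by simp
    have "q!i0 = b!s" using qhi[of i0] lq s by simp
    then show "(q!i0,xi)\<in>E\<^sup>*" using bwd_reach[OF b(7), of s] \<open>s<m\<close> b0 by simp
  qed
  have nbl: "\<not> blocked E q {xi}"
    using unblocked[OF acyc sh _ xc rc] unfolding m'_def by simp
  have dq: "distinct q"
  proof -
    have "set (take i0 P) \<inter> set (drop s b) = {}"
    proof -
      have "x \<notin> set b" if "x \<in> set (take i0 P)" for x
        using that nb by (auto simp: in_set_conv_nth)
      then show ?thesis by (meson disjoint_iff in_set_dropD)
    qed
    then show ?thesis unfolding q_def using P b by simp
  qed
  have adj: "\<forall>t. t + 1 < length q \<longrightarrow> (q ! t, q ! (t + 1)) \<in> E \<or> (q ! (t + 1), q ! t) \<in> E"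
    using sh by (metis)
  have qne: "q \<noteq> []" using lq s by auto
  have hq: "hd q = xk"
  proof (cases "i0 = 0")
    case True
    then show ?thesis using qhi[of 0] qne s P by (simp add: hd_conv_nth)
  next
    case False
    then show ?thesis using qlo[of 0] qne P by (simp add: hd_conv_nth)
  qed
  have "last q = xj" unfolding q_def using s b by simp
  then have "path_between E q xk xj" using hq dq adj qne
    unfolding path_between_def is_path_def by simp
  then show ?thesis using nbl unfolding d_separated_def by blast
qed

theorem lemma8:
  fixes X U :: "'v set" and E :: "('v \<times> 'v) set"
    and M :: "'w measure"
    and val :: "'v \<Rightarrow> 'w \<Rightarrow> real"
    and noise :: "'v \<Rightarrow> 'w \<Rightarrow> real"
    and f :: "'v \<Rightarrow> 'v \<Rightarrow> real \<Rightarrow> real"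
    and xi xj xk :: 'v
  assumes fin: "finite X" "finite U" and disj: "X \<inter> U = {}"
    and dag: "is_dag (X \<union> U) E"
    and prob: "prob_space M"
    and noise_rv: "\<And>v. v \<in> X \<union> U \<Longrightarrow> noise v \<in> borel_measurable M"
    and noise_indep: "prob_space.indep_vars M (\<lambda>_. borel) noise (X \<union> U)"
    and f_meas: "\<And>v u. v \<in> X \<union> U \<Longrightarrow> u \<in> parents E v \<Longrightarrow> f v u \<in> borel_measurable borel"
    and f_nonlin: "\<And>v u. v \<in> X \<union> U \<Longrightarrow> u \<in> parents E v \<Longrightarrow> nonlinear (f v u)"
    and sem: "\<And>v \<omega>. v \<in> X \<union> U \<Longrightarrow> \<omega> \<in> space M \<Longrightarrow>
        val v \<omega> = (\<Sum>u \<in> parents E v \<inter> X. f v u (val u \<omega>))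
                  + (\<Sum>u \<in> parents E v \<inter> U. f v u (val u \<omega>)) + noise v \<omega>"
    and CFC: "\<And>a b S. a \<in> X \<union> U \<Longrightarrow> b \<in> X \<union> U \<Longrightarrow> S \<subseteq> X \<union> U \<Longrightarrow>
        a \<noteq> b \<Longrightarrow> a \<notin> S \<Longrightarrow> b \<notin> S \<Longrightarrow>
        cond_indep M val a b S \<Longrightarrow> d_separated E a b S"
    and obs: "xi \<in> X" "xj \<in> X" "xk \<in> X"
    and dist: "xi \<noteq> xj" "xi \<noteq> xk" "xj \<noteq> xk"
    and anc: "ancestor E xk xi"
    and ci: "cond_indep M val xk xj {xi}"
  shows "(\<not> (\<exists>p. backdoor_path E p xi xj)) \<and> \<not> ancestor E xj xi"
proof -
  have ds: "d_separated E xk xj {xi}"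
    using CFC[of xk xj "{xi}"] obs dist ci by auto
  have acyc: "acyclic E" using dag unfolding is_dag_def by simp
  obtain P where P: "P\<noteq>[]" "distinct P" "hd P = xk" "last P = xi"
      "\<forall>t. t+1<length P \<longrightarrow> (P!t,P!(t+1))\<in>E"
    using rtrancl_dpath[of xk xi E] anc unfolding ancestor_def by (meson trancl_into_rtrancl)
  have 1: "\<not> (\<exists>p. backdoor_path E p xi xj)"
  proof
    assume "\<exists>p. backdoor_path E p xi xj"
    then obtain b m where b: "path_between E b xi xj" "0 < m" "m + 1 < length b"
      "\<forall>t < m. (b ! (t + 1), b ! t) \<in> E"
      "\<forall>t. m \<le> t \<and> t + 1 < length b \<longrightarrow> (b ! t, b ! (t + 1)) \<in> E"
      unfolding backdoor_path_def by blast
    have "\<not> d_separated E xk xj {xi}"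
      apply (rule core[OF acyc P(2,1,3,4,5), of b xj m])
      using b dist unfolding path_between_def is_path_def by auto
    then show False using ds by blast
  qed
  have 2: "\<not> ancestor E xj xi"
  proof
    assume "ancestor E xj xi"
    then obtain D where D: "D\<noteq>[]" "distinct D" "hd D = xj" "last D = xi"
      "\<forall>t. t+1<length D \<longrightarrow> (D!t,D!(t+1))\<in>E"
      using rtrancl_dpath[of xj xi E] unfolding ancestor_def by (meson trancl_into_rtrancl)
    have lD: "length D \<ge> 2"
    proof (rule ccontr)
      assume "\<not> length D \<ge> 2"
      then have "length D = 1" using D(1) by (cases D) (auto simp: not_le)
      then show False using D dist by (cases D) auto
    qed
    have bw: "\<forall>t<length D - 1. (rev D!(t+1), rev D!t)\<in>E"
    proof (intro allI impI)
      fix t assume t: "t < length D - 1"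
      have "(D!(length D - 1 - (t+1)), D!(length D - 1 - (t+1) + 1))\<in>E"
        using D(5) t by auto
      moreover have "length D - 1 - (t+1) + 1 = length D - 1 - t" using t by simp
      ultimately show "(rev D!(t+1), rev D!t)\<in>E" using t by (simp add: rev_nth)
    qed
    have "\<not> d_separated E xk xj {xi}"
      apply (rule core[OF acyc P(2,1,3,4,5), of "rev D" xj "length D - 1"])
      using D lD bw dist by (auto simp: hd_rev last_rev)
    then show False using ds by blast
  qed
  show ?thesis using 1 2 by blast
qed

end
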